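(* Let $\mathbf S$ be a complete semilattice. Then the set $\Gamma$ of all non-generators of $\mathbf S$ is a complete subsemilattice of $\mathbf S$, and $\Gamma$ equals the intersection of all maximal proper complete subsemilattices of $\mathbf S$ (this intersection being $S$ itself if there are no maximal proper complete subsemilattices).
   Context: A complete semilattice is a partially ordered set $S$ in which every subset, including the empty set, has a meet (infimum) $\bigwedge$; in particular $S$ has a maximum. A complete subsemilattice of $\mathbf S$ is a subset $T\subseteq S$ such that for every $Y\subseteq T$ (including $Y=\emptyset$, so $T$ contains the maximum of $S$) the meet $\bigwedge Y$ computed in $S$ lies in $T$. For $X\subseteq S$, $\langle X\rangle$ denotes the complete subsemilattice generated by $X$, i.e. the intersection of all complete subsemilattices containing $X$, and $\langle X,a\rangle=\langle X\cup\{a\}\rangle$. An element $a\in S$ is a non-generator if for every $X\subseteq S$, $\langle X,a\rangle=S$ implies $\langle X\rangle=S$; otherwise $a$ is a relative generator. A maximal proper complete subsemilattice is a complete subsemilattice $T\neq S$ not properly contained in any complete subsemilattice other than $S$. *)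

theory Defs
  imports Main
begin

text \<open>The complete semilattice S is the whole carrier of a type of class complete_lattice
  (a poset with all meets, including the empty meet, is a complete lattice); the meet is Inf.\<close>

definition complete_subsemilattice :: "'a::complete_lattice set \<Rightarrow> bool" where
  "complete_subsemilattice T \<longleftrightarrow> (\<forall>Y. Y \<subseteq> T \<longrightarrow> Inf Y \<in> T)"

definition generated :: "'a::complete_lattice set \<Rightarrow> 'a set" where
  "generated X = \<Inter> {T. complete_subsemilattice T \<and> X \<subseteq> T}"

definition non_generator :: "'a::complete_lattice \<Rightarrow> bool" where
  "non_generator a \<longleftrightarrow>
     (\<forall>X. generated (X \<union> {a}) = UNIV \<longrightarrow> generated X = UNIV)"

definition maximal_proper_csub :: "'a::complete_lattice set \<Rightarrow> bool" where
  "maximal_proper_csub T \<longleftrightarrow> complete_subsemilattice T \<and> T \<noteq> UNIV \<and>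
     (\<forall>U. complete_subsemilattice U \<and> T \<subseteq> U \<longrightarrow> U = T \<or> U = UNIV)"

end

theory Submission
  imports Defs
begin

lemma gen_csub: "complete_subsemilattice (generated X)"
  unfolding generated_def complete_subsemilattice_def
  by (auto simp: subset_eq)

lemma gen_sup: "X \<subseteq> generated X"
  unfolding generated_def by auto

lemma gen_least: "complete_subsemilattice T \<Longrightarrow> X \<subseteq> T \<Longrightarrow> generated X \<subseteq> T"
  unfolding generated_def by auto

lemma gen_eq: "generated X = {Inf Y |Y. Y \<subseteq> X}"
proof
  have "complete_subsemilattice {Inf Y |Y. Y \<subseteq> X}"
    unfolding complete_subsemilattice_def
  proof (intro allI impI)
    fix Z assume Z: "Z \<subseteq> {Inf Y |Y. Y \<subseteq> X}"
    define f where "f z = (SOME Y. Y \<subseteq> X \<and> z = Inf Y)" for z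
    have f: "f z \<subseteq> X \<and> z = Inf (f z)" if "z \<in> Z" for z
    proof -
      have "\<exists>Y. Y \<subseteq> X \<and> z = Inf Y" using Z that by blast
      thus ?thesis unfolding f_def by (rule someI_ex)
    qed
    have "Inf (\<Union> (f ` Z)) = (INF z\<in>Z. Inf (f z))" 
    proof (rule order.antisym)
      show "Inf (\<Union> (f ` Z)) \<le> (INF z\<in>Z. Inf (f z))"
      proof (rule INF_greatest)
        fix z assume "z \<in> Z"
        hence "f z \<subseteq> \<Union> (f ` Z)" by blast
        thus "Inf (\<Union> (f ` Z)) \<le> Inf (f z)" by (rule Inf_superset_mono)
      qed
      show "(INF z\<in>Z. Inf (f z)) \<le> Inf (\<Union> (f ` Z))"
      proof (rule Inf_greatest)
        fix x assume "x \<in> \<Union> (f ` Z)"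
        then obtain z where "z \<in> Z" "x \<in> f z" by blast
        have "(INF z\<in>Z. Inf (f z)) \<le> Inf (f z)" using \<open>z \<in> Z\<close> by (rule INF_lower)
        also have "\<dots> \<le> x" using \<open>x \<in> f z\<close> by (rule Inf_lower)
        finally show "(INF z\<in>Z. Inf (f z)) \<le> x" .
      qed
    qed
    also have "\<dots> = (INF z\<in>Z. z)" by (rule INF_cong) (use f in simp_all)
    also have "\<dots> = Inf Z" by simp
    finally have e: "Inf (\<Union> (f ` Z)) = Inf Z" .
    have "\<Union> (f ` Z) \<subseteq> X" using f by auto
    with e show "Inf Z \<in> {Inf Y |Y. Y \<subseteq> X}" by (intro CollectI exI[of _ "\<Union> (f ` Z)"]) simp
  qed
  moreover have "X \<subseteq> {Inf Y |Y. Y \<subseteq> X}"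
  proof
    fix x assume "x \<in> X" then show "x \<in> {Inf Y |Y. Y \<subseteq> X}"
      by (intro CollectI exI[of _ "{x}"]) auto
  qed
  ultimately show "generated X \<subseteq> {Inf Y |Y. Y \<subseteq> X}" by (rule gen_least)
next
  show "{Inf Y |Y. Y \<subseteq> X} \<subseteq> generated X"
  proof
    fix x assume "x \<in> {Inf Y |Y. Y \<subseteq> X}"
    then obtain Y where "Y \<subseteq> X" "x = Inf Y" by blast
    hence "Y \<subseteq> generated X" using gen_sup by blast
    hence "Inf Y \<in> generated X" using gen_csub[of X] unfolding complete_subsemilattice_def by blast
    thus "x \<in> generated X" using \<open>x = Inf Y\<close> by simp
  qed
qed

lemma above_le: "(a::'a::complete_lattice) \<le> Inf {y. a < y}"
  by (auto intro: Inf_greatest)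

lemma compl_csub:
  assumes "Inf {y. a < y} \<noteq> (a::'a::complete_lattice)"
  shows "complete_subsemilattice (- {a})"
  unfolding complete_subsemilattice_def
proof (intro allI impI)
  fix Y assume Y: "Y \<subseteq> - {a}"
  show "Inf Y \<in> - {a}"
  proof
    assume "Inf Y \<in> {a}"
    hence e: "Inf Y = a" by simp
    have "Y \<subseteq> {y. a < y}"
    proof
      fix y assume "y \<in> Y"
      hence "a \<le> y" "y \<noteq> a" using Y e Inf_lower by auto
      thus "y \<in> {y. a < y}" by simp
    qed
    hence "Inf {y. a < y} \<le> a" using e Inf_superset_mono by metis
    thus False using assms above_le[of a] by auto
  qed
qed

lemma char: "non_generator (a::'a::complete_lattice) \<longleftrightarrow> Inf {y. a < y} = a"
proof
  assume ng: "non_generator a"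
  show "Inf {y. a < y} = a"
  proof (rule ccontr)
    assume n: "Inf {y. a < y} \<noteq> a"
    have u: "- {a} \<union> {a} = UNIV" by auto
    have "generated (- {a} \<union> {a}) = UNIV" unfolding u using gen_sup[of UNIV] by auto
    hence "generated (- {a}) = UNIV" using ng unfolding non_generator_def by blast
    moreover have "generated (- {a}) \<subseteq> - {a}" using gen_least[OF compl_csub[OF n]] by simp
    ultimately show False by auto
  qed
next
  assume eq: "Inf {y. a < y} = a"
  show "non_generator a"
    unfolding non_generator_def
  proof (intro allI impI)
    fix X assume g: "generated (X \<union> {a}) = UNIV"
    have "{y. a < y} \<subseteq> generated X"
    proof
      fix y assume y: "y \<in> {y. a < y}"
      have "y \<in> generated (X \<union> {a})" using g by simp
      hence "y \<in> {Inf Y |Y. Y \<subseteq> X \<union> {a}}" by (simp only: gen_eq)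
      then obtain Y where Y: "Y \<subseteq> X \<union> {a}" "y = Inf Y" by blast
      have "a \<notin> Y"
      proof
        assume "a \<in> Y" hence "y \<le> a" using Y(2) Inf_lower by simp
        thus False using y by simp
      qed
      hence "Y \<subseteq> X" using Y by auto
      hence "y \<in> {Inf Y |Y. Y \<subseteq> X}" using Y(2) by blast
      thus "y \<in> generated X" by (simp only: gen_eq)
    qed
    hence "Inf {y. a < y} \<in> generated X" using gen_csub[of X] unfolding complete_subsemilattice_def by blast
    hence "a \<in> generated X" by (simp only: eq)
    hence "X \<union> {a} \<subseteq> generated X" using gen_sup by auto
    hence "generated (X \<union> {a}) \<subseteq> generated X" by (rule gen_least[OF gen_csub])
    thus "generated X = UNIV" using g by auto
  qed
qed

theorem proposition1:
  shows "complete_subsemilattice {a::'a::complete_lattice. non_generator a} \<and>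
         {a::'a. non_generator a} = \<Inter> {T. maximal_proper_csub T}"
proof (intro conjI)
  show "complete_subsemilattice {a::'a::complete_lattice. non_generator a}"
    unfolding complete_subsemilattice_def
  proof (intro allI impI)
    fix Y :: "'a set" assume Y: "Y \<subseteq> {a. non_generator a}"
    show "Inf Y \<in> {a. non_generator a}"
    proof (cases "Inf Y \<in> Y")
      case True thus ?thesis using Y by auto
    next
      case False
      have "Y \<subseteq> {y. Inf Y < y}"
      proof
        fix y assume "y \<in> Y"
        hence "Inf Y \<le> y" "y \<noteq> Inf Y" using False Inf_lower by auto
        thus "y \<in> {y. Inf Y < y}" by simp
      qed
      hence "Inf {y. Inf Y < y} \<le> Inf Y" using Inf_superset_mono by metis
      hence "Inf {y. Inf Y < y} = Inf Y" using above_le[of "Inf Y"] by (rule order.antisym)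
      thus ?thesis by (simp add: char)
    qed
  qed
  show "{a::'a. non_generator a} = \<Inter> {T. maximal_proper_csub T}"
  proof
    show "{a::'a. non_generator a} \<subseteq> \<Inter> {T. maximal_proper_csub T}"
    proof (clarify)
      fix a :: 'a and T :: "'a set" assume ng: "non_generator a" and m: "maximal_proper_csub T"
      show "a \<in> T"
      proof (rule ccontr)
        assume "a \<notin> T"
        have "T \<subseteq> generated (T \<union> {a})" using gen_sup[of "T \<union> {a}"] by blast
        hence "generated (T \<union> {a}) = T \<or> generated (T \<union> {a}) = UNIV"
          using m gen_csub unfolding maximal_proper_csub_def by blast
        moreover have "a \<in> generated (T \<union> {a})" using gen_sup[of "T \<union> {a}"] by blast
        ultimately have "generated (T \<union> {a}) = UNIV" using \<open>a \<notin> T\<close> by auto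
        hence "generated T = UNIV" using ng unfolding non_generator_def by simp
        moreover have "generated T \<subseteq> T" using m unfolding maximal_proper_csub_def
          by (intro gen_least) simp_all
        ultimately have "T = UNIV" by blast
        thus False using m unfolding maximal_proper_csub_def by simp
      qed
    qed
  next
    show "\<Inter> {T. maximal_proper_csub T} \<subseteq> {a::'a. non_generator a}"
    proof
      fix a :: 'a assume a: "a \<in> \<Inter> {T. maximal_proper_csub T}"
      show "a \<in> {a. non_generator a}"
      proof (rule ccontr)
        assume "a \<notin> {a. non_generator a}"
        hence n: "Inf {y. a < y} \<noteq> a" using char by auto
        have "\<forall>U. complete_subsemilattice U \<and> - {a} \<subseteq> U \<longrightarrow> U = - {a} \<or> U = UNIV"
        proof (intro allI impI)
          fix U :: "'a set" assume "complete_subsemilattice U \<and> - {a} \<subseteq> U"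
          hence s: "- {a} \<subseteq> U" by simp
          show "U = - {a} \<or> U = UNIV"
          proof (cases "a \<in> U")
            case True
            have "U = UNIV"
            proof (rule set_eqI, rule iffI)
              fix x show "x \<in> U" if "x \<in> (UNIV::'a set)" using True s by (cases "x = a") auto
            qed simp
            thus ?thesis by simp
          next
            case False thus ?thesis using s by blast
          qed
        qed
        moreover have "- {a} \<noteq> (UNIV :: 'a set)" by blast
        ultimately have "maximal_proper_csub (- {a})"
          unfolding maximal_proper_csub_def using compl_csub[OF n] by blast
        thus False using a by auto
      qed
    qed
  qed
qed

end
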